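(* Let $(\mathfrak{g},[\cdot,\cdot],\langle\cdot,\cdot\rangle)$ be a quadratic Lie algebra with center $Z(\mathfrak{g})$. (1) If $H^2(\mathfrak{g})=\{0\}$ and $Z(\mathfrak{g})\neq\{0\}$, then $\mathfrak{g}$ admits no $k$-symplectic structure (for any $k\ge1$). (2) If $\dim Z(\mathfrak{g})=1$ and the restriction of $\langle\cdot,\cdot\rangle$ to $Z(\mathfrak{g})$ is nondegenerate, then every derivation $D$ of $\mathfrak{g}$ which is skew-symmetric with respect to $\langle\cdot,\cdot\rangle$ satisfies $D(Z(\mathfrak{g}))=0$. In particular $\mathfrak{g}$ admits no $k$-symplectic structure (for any $k\ge1$).
   Context: A quadratic Lie algebra is a finite-dimensional real Lie algebra $\mathfrak{g}$ endowed with a nondegenerate symmetric bilinear form $\langle\cdot,\cdot\rangle$ which is invariant: $\langle [u,v],w\rangle+\langle [u,w],v\rangle=0$ for all $u,v,w\in\mathfrak{g}$. $H^2(\mathfrak{g})$ denotes the second Chevalley–Eilenberg cohomology group of $\mathfrak{g}$ with trivial real coefficients. A $k$-symplectic structure on a real Lie algebra $\mathfrak{g}$ of dimension $n(k+1)$ ($n,k\ge1$) is a pair consisting of a Lie subalgebra $\mathfrak{h}\subset\mathfrak{g}$ of dimension $nk$ and a family $(\theta_1,\dots,\theta_k)$ of skew-symmetric bilinear forms on $\mathfrak{g}$ such that: (i) $\bigcap_{i=1}^k\ker\theta_i=\{0\}$, where $\ker\theta_i=\{u\in\mathfrak{g}:\theta_i(u,v)=0\ \forall v\in\mathfrak{g}\}$;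 (ii) each $\theta_i$ is a 2-cocycle: $\theta_i([u,v],w)+\theta_i([v,w],u)+\theta_i([w,u],v)=0$ for all $u,v,w$; (iii) $\theta_i(u,v)=0$ for all $u,v\in\mathfrak{h}$ and all $i$. $\mathfrak{g}$ admits a $k$-symplectic structure if such data exist (for the appropriate $n$). *)

theory Defs
  imports "HOL-Analysis.Analysis"
begin

text \<open>A finite-dimensional real Lie algebra is modelled on a type of class euclidean_space
  (every finite-dimensional real vector space is of this form); the inner product of that
  class plays no role.\<close>

definition lie_algebra :: "('a::euclidean_space \<Rightarrow> 'a \<Rightarrow> 'a) \<Rightarrow> bool" where
  "lie_algebra br \<longleftrightarrow> bilinear br \<and> (\<forall>u. br u u = 0) \<and>
     (\<forall>u v w. br u (br v w) + br v (br w u) + br w (br u v) = 0)"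

definition quadratic_lie_algebra ::
  "('a::euclidean_space \<Rightarrow> 'a \<Rightarrow> 'a) \<Rightarrow> ('a \<Rightarrow> 'a \<Rightarrow> real) \<Rightarrow> bool" where
  "quadratic_lie_algebra br B \<longleftrightarrow> lie_algebra br \<and> bilinear B \<and>
     (\<forall>u v. B u v = B v u) \<and>
     (\<forall>u. (\<forall>v. B u v = 0) \<longrightarrow> u = 0) \<and>
     (\<forall>u v w. B (br u v) w + B (br u w) v = 0)"

definition lie_center :: "('a::euclidean_space \<Rightarrow> 'a \<Rightarrow> 'a) \<Rightarrow> 'a set" where
  "lie_center br = {z. \<forall>u. br z u = 0}"

definition skew_form :: "('a::euclidean_space \<Rightarrow> 'a \<Rightarrow> real) \<Rightarrow> bool" where
  "skew_form \<theta> \<longleftrightarrow> bilinear \<theta> \<and> (\<forall>u v. \<theta> u v = - \<theta> v u)"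

definition two_cocycle ::
  "('a::euclidean_space \<Rightarrow> 'a \<Rightarrow> 'a) \<Rightarrow> ('a \<Rightarrow> 'a \<Rightarrow> real) \<Rightarrow> bool" where
  "two_cocycle br \<theta> \<longleftrightarrow> skew_form \<theta> \<and>
     (\<forall>u v w. \<theta> (br u v) w + \<theta> (br v w) u + \<theta> (br w u) v = 0)"

definition two_coboundary ::
  "('a::euclidean_space \<Rightarrow> 'a \<Rightarrow> 'a) \<Rightarrow> ('a \<Rightarrow> 'a \<Rightarrow> real) \<Rightarrow> bool" where
  "two_coboundary br \<theta> \<longleftrightarrow> (\<exists>f::'a \<Rightarrow> real. linear f \<and> (\<forall>u v. \<theta> u v = f (br u v)))"

definition H2_trivial :: "('a::euclidean_space \<Rightarrow> 'a \<Rightarrow> 'a) \<Rightarrow> bool" where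
  "H2_trivial br \<longleftrightarrow> (\<forall>\<theta>. two_cocycle br \<theta> \<longrightarrow> two_coboundary br \<theta>)"

definition lie_subalgebra :: "('a::euclidean_space \<Rightarrow> 'a \<Rightarrow> 'a) \<Rightarrow> 'a set \<Rightarrow> bool" where
  "lie_subalgebra br h \<longleftrightarrow> subspace h \<and> (\<forall>u\<in>h. \<forall>v\<in>h. br u v \<in> h)"

definition form_kernel :: "('a::euclidean_space \<Rightarrow> 'a \<Rightarrow> real) \<Rightarrow> 'a set" where
  "form_kernel \<theta> = {u. \<forall>v. \<theta> u v = 0}"

definition k_symplectic_structure ::
  "('a::euclidean_space \<Rightarrow> 'a \<Rightarrow> 'a) \<Rightarrow> nat \<Rightarrow> 'a set \<Rightarrow> (nat \<Rightarrow> 'a \<Rightarrow> 'a \<Rightarrow> real) \<Rightarrow> bool" where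
  "k_symplectic_structure br k h \<theta> \<longleftrightarrow>
     (\<exists>n::nat. n \<ge> 1 \<and> DIM('a) = n * (k + 1) \<and> dim h = n * k) \<and>
     lie_subalgebra br h \<and>
     (\<forall>i<k. two_cocycle br (\<theta> i)) \<and>
     (\<Inter>i\<in>{..<k}. form_kernel (\<theta> i)) = {0} \<and>
     (\<forall>i<k. \<forall>u\<in>h. \<forall>v\<in>h. \<theta> i u v = 0)"

definition admits_k_symplectic :: "('a::euclidean_space \<Rightarrow> 'a \<Rightarrow> 'a) \<Rightarrow> nat \<Rightarrow> bool" where
  "admits_k_symplectic br k \<longleftrightarrow> (\<exists>h \<theta>. k_symplectic_structure br k h \<theta>)"

definition lie_derivation :: "('a::euclidean_space \<Rightarrow> 'a \<Rightarrow> 'a) \<Rightarrow> ('a \<Rightarrow> 'a) \<Rightarrow> bool" where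
  "lie_derivation br D \<longleftrightarrow> linear D \<and> (\<forall>u v. D (br u v) = br (D u) v + br u (D v))"

definition skew_wrt :: "('a::euclidean_space \<Rightarrow> 'a \<Rightarrow> real) \<Rightarrow> ('a \<Rightarrow> 'a) \<Rightarrow> bool" where
  "skew_wrt B D \<longleftrightarrow> (\<forall>u v. B (D u) v + B u (D v) = 0)"

end

theory Submission
  imports Defs
begin

lemma linrep:
  fixes \<psi> :: "'a::euclidean_space \<Rightarrow> real"
  assumes "linear \<psi>"
  shows "\<psi> v = (\<Sum>b\<in>Basis. \<psi> b *\<^sub>R b) \<bullet> v"
proof -
  have "\<psi> v = \<psi> (\<Sum>b\<in>Basis. (v \<bullet> b) *\<^sub>R b)" by (simp add: euclidean_representation)
  also have "\<dots> = (\<Sum>b\<in>Basis. (v \<bullet> b) * \<psi> b)"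
    using assms by (simp add: linear_sum linear_scale)
  also have "\<dots> = (\<Sum>b\<in>Basis. \<psi> b * (b \<bullet> v))" by (simp add: mult.commute inner_commute)
  also have "\<dots> = (\<Sum>b\<in>Basis. \<psi> b *\<^sub>R b) \<bullet> v"
    by (simp add: inner_sum_left mult.commute)
  finally show ?thesis .
qed

lemma riesz:
  fixes B :: "'a::euclidean_space \<Rightarrow> 'a \<Rightarrow> real"
  assumes bl: "bilinear B" and nd: "\<forall>u. (\<forall>v. B u v = 0) \<longrightarrow> u = 0"
    and lin: "linear \<phi>"
  shows "\<exists>y. \<forall>v. \<phi> v = B y v"
proof -
  define M where "M y = (\<Sum>b\<in>Basis. B y b *\<^sub>R b)" for y
  have linB: "linear (B y)" for y using bl by (simp add: bilinear_def)
  have Mrep: "B y v = M y \<bullet> v" for y v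
    unfolding M_def by (rule linrep[OF linB])
  have "linear M"
    unfolding M_def
    by (rule linearI) (simp_all add: bilinear_ladd[OF bl] bilinear_lmul[OF bl] scaleR_add_left sum.distrib scaleR_sum_right)
  moreover have "inj M"
  proof (rule injI)
    fix x y assume "M x = M y"
    then have "\<forall>v. B (x - y) v = 0"
      using Mrep bilinear_ladd[OF bl, of x "-y"] bilinear_lmul[OF bl, of "-1" y]
      by (simp add: inner_diff_left)
    then show "x = y" using nd by auto
  qed
  ultimately have "surj M" by (rule linear_injective_imp_surjective) simp
  then obtain y where "M y = (\<Sum>b\<in>Basis. \<phi> b *\<^sub>R b)" by (metis surjD)
  then show ?thesis using linrep[OF lin] Mrep by metis
qed

lemma center_subspace:
  assumes "bilinear br"
  shows "subspace (lie_center br)"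
  unfolding subspace_def lie_center_def
  using bilinear_lzero[OF assms] bilinear_ladd[OF assms] bilinear_lmul[OF assms] by auto

lemma dim1_mult:
  fixes S :: "'a::euclidean_space set"
  assumes "subspace S" "dim S = 1" "z \<in> S" "z \<noteq> 0" "y \<in> S"
  shows "\<exists>c. y = c *\<^sub>R z"
proof -
  have "span {z} = span S"
    by (rule dim_eq_span) (use assms in \<open>auto simp: dim_singleton\<close>)
  then have "y \<in> span {z}" using assms span_eq_iff by blast
  then show ?thesis by (auto simp: span_singleton)
qed

lemma dim1_nonzero:
  fixes S :: "'a::euclidean_space set"
  assumes "dim S = 1"
  shows "\<exists>z\<in>S. z \<noteq> 0"
  using assms dim_eq_0[of S] by auto

theorem mainTheorem2:
  fixes br :: "'a::euclidean_space \<Rightarrow> 'a \<Rightarrow> 'a" and B :: "'a \<Rightarrow> 'a \<Rightarrow> real"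
  assumes "quadratic_lie_algebra br B"
  shows "(H2_trivial br \<and> lie_center br \<noteq> {0} \<longrightarrow>
            (\<forall>k\<ge>1. \<not> admits_k_symplectic br k))
       \<and> (dim (lie_center br) = 1 \<and>
          (\<forall>z\<in>lie_center br. (\<forall>w\<in>lie_center br. B z w = 0) \<longrightarrow> z = 0) \<longrightarrow>
            (\<forall>D. lie_derivation br D \<and> skew_wrt B D \<longrightarrow> (\<forall>z\<in>lie_center br. D z = 0))
            \<and> (\<forall>k\<ge>1. \<not> admits_k_symplectic br k))"
proof -
  from assms have la: "lie_algebra br" and blB: "bilinear B" and symB: "\<forall>u v. B u v = B v u"
    and nd: "\<forall>u. (\<forall>v. B u v = 0) \<longrightarrow> u = 0"
    and inv: "\<forall>u v w. B (br u v) w + B (br u w) v = 0"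
    unfolding quadratic_lie_algebra_def by auto
  from la have blbr: "bilinear br" and alt: "\<forall>u. br u u = 0"
    unfolding lie_algebra_def by auto
  have anti: "br u v = - br v u" for u v
  proof -
    have "br (u+v) (u+v) = 0" using alt by blast
    then have "br u u + br u v + (br v u + br v v) = 0"
      by (simp add: bilinear_ladd[OF blbr] bilinear_radd[OF blbr] algebra_simps)
    then show ?thesis using alt by (simp add: eq_neg_iff_add_eq_0)
  qed
  have cyc: "B (br x y) z = B x (br y z)" for x y z
  proof -
    have e1: "B (br y z) x + B (br y x) z = 0" using inv by blast
    have "br y x = (-1) *\<^sub>R br x y" using anti[of y x] by simp
    then have e2: "B (br y x) z = - B (br x y) z" using bilinear_lmul[OF blB, of "-1" "br x y" z] by simp
    have e3: "B x (br y z) = B (br y z) x" using symB by blast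
    show ?thesis using e1 e2 e3 by linarith
  qed
  let ?Z = "lie_center br"
  have Zsub: "subspace ?Z" by (rule center_subspace[OF blbr])
  have no_ks: "\<not> admits_k_symplectic br k"
    if k: "k \<ge> 1" and z0: "z \<in> ?Z" "z \<noteq> 0" and ker: "\<And>\<theta>. two_cocycle br \<theta> \<Longrightarrow> z \<in> form_kernel \<theta>"
    for k z
  proof
    assume "admits_k_symplectic br k"
    then obtain h \<theta> where "k_symplectic_structure br k h \<theta>" unfolding admits_k_symplectic_def by blast
    then have cc: "\<forall>i<k. two_cocycle br (\<theta> i)" and I: "(\<Inter>i\<in>{..<k}. form_kernel (\<theta> i)) = {0}"
      unfolding k_symplectic_structure_def by auto
    have "z \<in> (\<Inter>i\<in>{..<k}. form_kernel (\<theta> i))" using cc ker by auto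
    with I z0 show False by auto
  qed
  have part1: "H2_trivial br \<and> ?Z \<noteq> {0} \<longrightarrow> (\<forall>k\<ge>1. \<not> admits_k_symplectic br k)"
  proof (intro impI allI)
    fix k :: nat assume H: "H2_trivial br \<and> ?Z \<noteq> {0}" and k: "k \<ge> 1"
    have "0 \<in> ?Z" using Zsub subspace_0 by blast
    then obtain z where z: "z \<in> ?Z" "z \<noteq> 0" using H by blast
    show "\<not> admits_k_symplectic br k"
    proof (rule no_ks[OF k z])
      fix \<theta> assume "two_cocycle br \<theta>"
      then obtain f where "linear f" "\<forall>u v. \<theta> u v = f (br u v)"
        using H unfolding H2_trivial_def two_coboundary_def by blast
      then show "z \<in> form_kernel \<theta>" using z(1) linear_0[of f]
        unfolding form_kernel_def lie_center_def by auto
    qed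
  qed
  have part2: "(\<forall>D. lie_derivation br D \<and> skew_wrt B D \<longrightarrow> (\<forall>z\<in>?Z. D z = 0))
            \<and> (\<forall>k\<ge>1. \<not> admits_k_symplectic br k)"
    if d1: "dim ?Z = 1" and ndZ: "\<forall>z\<in>?Z. (\<forall>w\<in>?Z. B z w = 0) \<longrightarrow> z = 0"
  proof -
    have Bzz: "B z z \<noteq> 0" if zz: "z \<in> ?Z" "z \<noteq> 0" for z
    proof
      assume 0: "B z z = 0"
      have "\<forall>w\<in>?Z. B z w = 0"
      proof
        fix w assume "w \<in> ?Z"
        then obtain c where "w = c *\<^sub>R z" using dim1_mult[OF Zsub d1 zz] by blast
        then show "B z w = 0" using 0 bilinear_rmul[OF blB] by simp
      qed
      with ndZ zz show False by blast
    qed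
    have kill: "y = 0" if kk: "y \<in> ?Z" "z \<in> ?Z" "z \<noteq> 0" "B y z = 0" for y z
    proof -
      obtain c where c: "y = c *\<^sub>R z" using dim1_mult[OF Zsub d1 kk(2,3,1)] by blast
      then have "c * B z z = 0" using kk(4) bilinear_lmul[OF blB] by simp
      then show ?thesis using Bzz[OF kk(2,3)] c by simp
    qed
    have A: "\<forall>D. lie_derivation br D \<and> skew_wrt B D \<longrightarrow> (\<forall>z\<in>?Z. D z = 0)"
    proof (intro allI impI ballI)
      fix D z assume D: "lie_derivation br D \<and> skew_wrt B D" and z: "z \<in> ?Z"
      show "D z = 0"
      proof (cases "z = 0")
        case True then show ?thesis using D linear_0 unfolding lie_derivation_def by blast
      next
        case False
        have "D z \<in> ?Z"
          unfolding lie_center_def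
        proof (intro CollectI allI)
          fix u
          have "D (br z u) = br (D z) u + br z (D u)" using D unfolding lie_derivation_def by blast
          moreover have "br z u = 0" "br z (D u) = 0" using z unfolding lie_center_def by auto
          moreover have "D 0 = 0" using D linear_0 unfolding lie_derivation_def by blast
          ultimately show "br (D z) u = 0" by simp
        qed
        moreover have "B (D z) z = 0"
        proof -
          have "B (D z) z + B z (D z) = 0" using D unfolding skew_wrt_def by blast
          moreover have "B z (D z) = B (D z) z" using symB by blast
          ultimately show ?thesis by linarith
        qed
        ultimately show ?thesis using kill False z by blast
      qed
    qed
    obtain z where z: "z \<in> ?Z" "z \<noteq> 0" using dim1_nonzero[OF d1] by blast
    have ker: "z \<in> form_kernel \<theta>" if cc: "two_cocycle br \<theta>" for \<theta>
    proof -
      have sk: "skew_form \<theta>" and cy: "\<forall>u v w. \<theta> (br u v) w + \<theta> (br v w) u + \<theta> (br w u) v = 0"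
        using cc unfolding two_cocycle_def by auto
      have blt: "bilinear \<theta>" and skt: "\<forall>u v. \<theta> u v = - \<theta> v u" using sk unfolding skew_form_def by blast+
      have "linear (\<theta> z)" using blt by (simp add: bilinear_def)
      then obtain y where y: "\<forall>v. \<theta> z v = B y v" using riesz[OF blB nd] by blast
      have zc: "br z u = 0" for u using z unfolding lie_center_def by auto
      have "y \<in> ?Z"
        unfolding lie_center_def
      proof (intro CollectI allI)
        fix u
        have "\<forall>v. B (br y u) v = 0"
        proof
          fix v
          have "\<theta> (br u v) z + \<theta> (br v z) u + \<theta> (br z u) v = 0" using cy by blast
          moreover have "br v z = 0" using zc anti[of v z] by simp
          ultimately have "\<theta> (br u v) z = 0" using zc bilinear_lzero[OF blt] by simp
          moreover have "\<theta> z (br u v) = - \<theta> (br u v) z" using skt by blast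
          ultimately have "\<theta> z (br u v) = 0" by simp
          then show "B (br y u) v = 0" using y cyc by simp
        qed
        then show "br y u = 0" using nd by blast
      qed
      moreover have "B y z = 0"
      proof -
        have "\<theta> z z = - \<theta> z z" using skt by blast
        then have "\<theta> z z = 0" by linarith
        then show ?thesis using y by simp
      qed
      ultimately have "y = 0" using kill z by blast
      then show ?thesis using y bilinear_lzero[OF blB] unfolding form_kernel_def by simp
    qed
    have "\<forall>k\<ge>1. \<not> admits_k_symplectic br k" using no_ks[OF _ z ker] by blast
    with A show ?thesis by blast
  qed
  show ?thesis using part1 part2 by blast
qed

end
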